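(* Let $k$ be a non-negative integer, $m=4k+2$, and let $f$ be a natural number such that $\gcd(f,4m)=2$, $\gcd(f-1,4m)=1$, and $f^2+f-2\equiv 2m \pmod{4m}$. Then there exists a cyclic DCA$(4,4m+1;4m)$ satisfying P1 and P2.
   Context: Let $(G,+)$ be an abelian group of order $n$. A difference covering array DCA$(k,\eta;n)$ over $G$ is an $\eta\times k$ matrix $Q=[q(i,j)]$ (rows indexed $0,\dots,\eta-1$, columns $0,\dots,k-1$) with entries in $G$ such that for every pair of distinct columns $j,j'$ the multiset $\{q(i,j)-q(i,j') : 0\le i\le \eta-1\}$ contains every element of $G$ at least once. It is cyclic if $G=\mathbb{Z}_n$. A DCA$(k,n+1;n)$ is taken in normalized form: all entries of its last row (row $n$) and of its last column (column $k-1$) equal $0$. Such a DCA satisfies P1 if $0$ occurs at least twice in every column, and satisfies P2 if for all distinct columns $j,j'$ with $j\neq k-1\neq j'$, the set $\{q(i,j)-q(i,j') : 0\le i\le n-1\}$ equals $G\setminus\{0\}$. *)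

theory Defs
  imports "HOL-Number_Theory.Number_Theory"
begin

text \<open>Elements of Z_n are represented by
  integers in {0..<n}; subtraction in Z_n is integer subtraction followed by mod n.
  An eta x k matrix is a function Q with Q i j the entry in row i (i < eta), column j (j < k).\<close>

definition cyclic_DCA :: "nat \<Rightarrow> nat \<Rightarrow> nat \<Rightarrow> (nat \<Rightarrow> nat \<Rightarrow> int) \<Rightarrow> bool" where
  "cyclic_DCA k eta n Q \<longleftrightarrow>
     (\<forall>i<eta. \<forall>j<k. 0 \<le> Q i j \<and> Q i j < int n) \<and>
     (\<forall>j<k. \<forall>j'<k. j \<noteq> j' \<longrightarrow>
        (\<forall>g\<in>{0..<int n}. \<exists>i<eta. (Q i j - Q i j') mod int n = g))"

definition DCA_normalized :: "nat \<Rightarrow> nat \<Rightarrow> (nat \<Rightarrow> nat \<Rightarrow> int) \<Rightarrow> bool" where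
  "DCA_normalized k n Q \<longleftrightarrow> (\<forall>j<k. Q n j = 0) \<and> (\<forall>i<n+1. Q i (k-1) = 0)"

definition DCA_P1 :: "nat \<Rightarrow> nat \<Rightarrow> (nat \<Rightarrow> nat \<Rightarrow> int) \<Rightarrow> bool" where
  "DCA_P1 k n Q \<longleftrightarrow> (\<forall>j<k. card {i. i < n+1 \<and> Q i j = 0} \<ge> 2)"

definition DCA_P2 :: "nat \<Rightarrow> nat \<Rightarrow> (nat \<Rightarrow> nat \<Rightarrow> int) \<Rightarrow> bool" where
  "DCA_P2 k n Q \<longleftrightarrow> (\<forall>j<k. \<forall>j'<k. j \<noteq> j' \<longrightarrow> j \<noteq> k-1 \<longrightarrow> j' \<noteq> k-1 \<longrightarrow>
      (\<lambda>i. (Q i j - Q i j') mod int n) ` {0..<n} = {1..<int n})"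

end

theory Submission
  imports Defs
begin


lemma modeq: "(a::int) = b + N*q \<Longrightarrow> a mod N = b mod N" by simp

definition Av :: "int \<Rightarrow> int \<Rightarrow> nat \<Rightarrow> int" where
  "Av L y e = y + L * int e"
definition Bv :: "int \<Rightarrow> int \<Rightarrow> nat \<Rightarrow> int" where
  "Bv L y e = 4*y + (if e=0 then 3 else if e=1 then 3*L else if e=2 then L+3 else 0)"
definition Cv :: "int \<Rightarrow> int \<Rightarrow> nat \<Rightarrow> int" where
  "Cv L y e = (2*L-2)*y + (if e=0 then 2*L-3 else if e=1 then -3 else if e=2 then 0 else 2*L)"
definition h1 :: "int \<Rightarrow> int \<Rightarrow> nat \<Rightarrow> int" where
  "h1 L y e = y + (if e=0 then 1 else if e=1 then 2*L else if e=2 then L+1 else 3*L)"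
definition h2 :: "int \<Rightarrow> int \<Rightarrow> nat \<Rightarrow> int" where
  "h2 L y e = y + (if e=0 then 1 else if e=1 then L+1 else if e=2 then 2*L else 3*L)"
definition h3 :: "int \<Rightarrow> int \<Rightarrow> nat \<Rightarrow> int" where
  "h3 L y e = 2*y + (if e=0 then 2 else if e=1 then 1 else if e=2 then 2*L+1 else 2*L)"
definition h4 :: "int \<Rightarrow> int \<Rightarrow> nat \<Rightarrow> int" where
  "h4 L y e = 2*y + (if e=0 then 3-L else if e=1 then L+3 else if e=2 then 0 else 2*L)"

lemma modj: "(x::int) = j + N*q \<Longrightarrow> 0 \<le> j \<Longrightarrow> j < N \<Longrightarrow> x mod N = j"
  by simp

lemma e4: "(e::nat) < 4 \<Longrightarrow> e = 0 \<or> e = 1 \<or> e = 2 \<or> e = 3" by auto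

lemma c10: assumes "L = 4*K+2" "e < 4"
  shows "(Bv L y e - Av L y e) mod (4*L) = (3 * h1 L y e) mod (4*L)"
  using e4[OF assms(2)] proof (elim disjE)
  assume "e=0" thus ?thesis by (auto simp: Av_def Bv_def h1_def algebra_simps)
next
  assume "e=1" thus ?thesis unfolding Av_def Bv_def h1_def
    by (intro modeq[where q="-1"]) (simp add: assms(1) algebra_simps)
next
  assume "e=2" thus ?thesis unfolding Av_def Bv_def h1_def
    by (intro modeq[where q="-1"]) (simp add: assms(1) algebra_simps)
next
  assume "e=3" thus ?thesis unfolding Av_def Bv_def h1_def
    by (intro modeq[where q="-3"]) (simp add: assms(1) algebra_simps)
qed

lemma c20: assumes "L = 4*K+2" "e < 4"
  shows "(Cv L y e - Av L y e) mod (4*L) = ((2*L-3) * h2 L y e) mod (4*L)"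
  using e4[OF assms(2)] proof (elim disjE)
  assume "e=0" thus ?thesis by (auto simp: Av_def Cv_def h2_def algebra_simps)
next
  assume "e=1" thus ?thesis unfolding Av_def Cv_def h2_def
    by (intro modeq[where q="-(2*K+1)"]) (simp add: assms(1) algebra_simps)
next
  assume "e=2" thus ?thesis unfolding Av_def Cv_def h2_def
    by (intro modeq[where q="1-L"]) (simp add: assms(1) algebra_simps)
next
  assume "e=3" thus ?thesis unfolding Av_def Cv_def h2_def
    by (intro modeq[where q="-6*K-1"]) (simp add: assms(1) algebra_simps)
qed

lemma c21: assumes "L = 4*K+2" "e < 4"
  shows "(Cv L y e - Bv L y e) mod (4*L) = ((L-3) * h3 L y e) mod (4*L)"
  using e4[OF assms(2)] proof (elim disjE)
  assume "e=0" thus ?thesis by (auto simp: Bv_def Cv_def h3_def algebra_simps)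
next
  assume "e=1" thus ?thesis unfolding Bv_def Cv_def h3_def
    by (intro modeq[where q="-1"]) (simp add: assms(1) algebra_simps)
next
  assume "e=2" thus ?thesis unfolding Bv_def Cv_def h3_def
    by (intro modeq[where q="-2*K"]) (simp add: assms(1) algebra_simps)
next
  assume "e=3" thus ?thesis unfolding Bv_def Cv_def h3_def
    by (intro modeq[where q="1-2*K"]) (simp add: assms(1) algebra_simps)
qed

lemma cC: assumes "L = 4*K+2" "e < 4"
  shows "(Cv L y e) mod (4*L) = ((L-1) * h4 L y e) mod (4*L)"
  using e4[OF assms(2)] proof (elim disjE)
  assume "e=0" thus ?thesis unfolding Cv_def h4_def
    by (intro modeq[where q="K"]) (simp add: assms(1) algebra_simps)
next
  assume "e=1" thus ?thesis unfolding Cv_def h4_def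
    by (intro modeq[where q="-(K+1)"]) (simp add: assms(1) algebra_simps)
next
  assume "e=2" thus ?thesis by (auto simp: Cv_def h4_def algebra_simps)
next
  assume "e=3" thus ?thesis unfolding Cv_def h4_def
    by (intro modeq[where q="-2*K"]) (simp add: assms(1) algebra_simps)
qed


lemma s1: assumes "L = 4*K+2" "K \<ge> 0" "1 \<le> j" "j < 4*L"
  shows "\<exists>y e. (0 \<le> y \<and> y < L \<and> e < 4) \<and> h1 L y e mod (4*L) = j"
proof -
  have "\<exists>y e. (0 \<le> y \<and> y < L \<and> e < 4) \<and> h1 L y e = j" (is "\<exists>y e. _ \<and> ?h y e = _")
  proof (cases "j \<le> L")
    case True thus ?thesis using assms by (intro exI[of _ "j-1"] exI[of _ 0]) (simp add: h1_def)
  next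
    case c1: False show ?thesis
    proof (cases "j \<le> 2*L")
      case True thus ?thesis using assms c1 by (intro exI[of _ "j-L-1"] exI[of _ 2]) (simp add: h1_def)
    next
      case c2: False show ?thesis
      proof (cases "j < 3*L")
        case True thus ?thesis using assms c2 by (intro exI[of _ "j-2*L"] exI[of _ 1]) (simp add: h1_def)
      next
        case False thus ?thesis using assms by (intro exI[of _ "j-3*L"] exI[of _ 3]) (simp add: h1_def)
      qed
    qed
  qed
  then obtain y e where "(0\<le>y\<and>y<L\<and>e<4)" "?h y e = j" by blast
  moreover have "j mod (4*L) = j" using assms by simp
  ultimately show ?thesis by metis
qed

lemma s2: assumes "L = 4*K+2" "K \<ge> 0" "1 \<le> j" "j < 4*L"
  shows "\<exists>y e. (0 \<le> y \<and> y < L \<and> e < 4) \<and> h2 L y e mod (4*L) = j"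
proof -
  have "\<exists>y e. (0 \<le> y \<and> y < L \<and> e < 4) \<and> h2 L y e = j" (is "\<exists>y e. _ \<and> ?h y e = _")
  proof (cases "j \<le> L")
    case True thus ?thesis using assms by (intro exI[of _ "j-1"] exI[of _ 0]) (simp add: h2_def)
  next
    case c1: False show ?thesis
    proof (cases "j \<le> 2*L")
      case True thus ?thesis using assms c1 by (intro exI[of _ "j-L-1"] exI[of _ 1]) (simp add: h2_def)
    next
      case c2: False show ?thesis
      proof (cases "j < 3*L")
        case True thus ?thesis using assms c2 by (intro exI[of _ "j-2*L"] exI[of _ 2]) (simp add: h2_def)
      next
        case False thus ?thesis using assms by (intro exI[of _ "j-3*L"] exI[of _ 3]) (simp add: h2_def)
      qed
    qed
  qed
  then obtain y e where "(0\<le>y\<and>y<L\<and>e<4)" "?h y e = j" by blast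
  moreover have "j mod (4*L) = j" using assms by simp
  ultimately show ?thesis by metis
qed

lemma s3: assumes "L = 4*K+2" "K \<ge> 0" "1 \<le> j" "j < 4*L"
  shows "\<exists>y e. (0 \<le> y \<and> y < L \<and> e < 4) \<and> h3 L y e mod (4*L) = j"
proof -
  have "\<exists>y e. (0 \<le> y \<and> y < L \<and> e < 4) \<and> h3 L y e = j" (is "\<exists>y e. _ \<and> ?h y e = _")
  proof (cases "j mod 2 = 0")
    case ev: True show ?thesis
    proof (cases "j \<le> 2*L")
      case True thus ?thesis using assms ev by (intro exI[of _ "j div 2 - 1"] exI[of _ 0]) (simp add: h3_def, presburger)
    next
      case False thus ?thesis using assms ev by (intro exI[of _ "(j - 2*L) div 2"] exI[of _ 3]) (simp add: h3_def, presburger)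
    qed
  next
    case od: False show ?thesis
    proof (cases "j < 2*L")
      case True thus ?thesis using assms od by (intro exI[of _ "(j - 1) div 2"] exI[of _ 1]) (simp add: h3_def, presburger)
    next
      case False thus ?thesis using assms od by (intro exI[of _ "(j - 2*L - 1) div 2"] exI[of _ 2]) (simp add: h3_def, presburger)
    qed
  qed
  then obtain y e where "(0\<le>y\<and>y<L\<and>e<4)" "?h y e = j" by blast
  moreover have "j mod (4*L) = j" using assms by simp
  ultimately show ?thesis by metis
qed

lemma s4: assumes "L = 4*K+2" "K \<ge> 0" "0 \<le> j" "j < 4*L"
  shows "\<exists>y e. (0 \<le> y \<and> y < L \<and> e < 4) \<and> h4 L y e mod (4*L) = j"
proof (cases "j mod 2 = 0")
  case ev: True show ?thesis
  proof (cases "j < 2*L")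
    case True
    have "h4 L (j div 2) 2 = j + (4*L)*(0)" using ev True assms by (simp add: h4_def, presburger)
    hence "h4 L (j div 2) 2 mod (4*L) = j" using assms(3,4) by (metis modj)
    moreover have "0 \<le> j div 2" "j div 2 < L" using ev True assms by presburger+
    ultimately show ?thesis by (intro exI[of _ "j div 2"] exI[of _ "2::nat"]) auto
  next
    case False
    have "h4 L ((j - 2*L) div 2) 3 = j + (4*L)*(0)" using ev False assms by (simp add: h4_def, presburger)
    hence "h4 L ((j - 2*L) div 2) 3 mod (4*L) = j" using assms(3,4) by (metis modj)
    moreover have "0 \<le> (j - 2*L) div 2" "(j - 2*L) div 2 < L" using ev False assms by presburger+
    ultimately show ?thesis by (intro exI[of _ "(j - 2*L) div 2"] exI[of _ "3::nat"]) auto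
  qed
next
  case od: False show ?thesis
  proof (cases "j \<le> L+1")
    case True
    have "h4 L ((j + L - 3) div 2) 0 = j + (4*L)*(0)" using od True assms by (simp add: h4_def, presburger)
    hence "h4 L ((j + L - 3) div 2) 0 mod (4*L) = j" using assms(3,4) by (metis modj)
    moreover have "0 \<le> (j + L - 3) div 2" "(j + L - 3) div 2 < L" using od True assms by presburger+
    ultimately show ?thesis by (intro exI[of _ "(j + L - 3) div 2"] exI[of _ "0::nat"]) auto
  next
    case c1: False show ?thesis
    proof (cases "j \<le> 3*L+1")
      case True
    have "h4 L ((j - L - 3) div 2) 1 = j + (4*L)*(0)" using od c1 True assms by (simp add: h4_def, presburger)
    hence "h4 L ((j - L - 3) div 2) 1 mod (4*L) = j" using assms(3,4) by (metis modj)
    moreover have "0 \<le> (j - L - 3) div 2" "(j - L - 3) div 2 < L" using od c1 True assms by presburger+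
    ultimately show ?thesis by (intro exI[of _ "(j - L - 3) div 2"] exI[of _ "1::nat"]) auto
    next
      case False
    have "h4 L ((j - 3*L - 3) div 2) 0 = j + (4*L)*(-1)" using od c1 False assms by (simp add: h4_def, presburger)
    hence "h4 L ((j - 3*L - 3) div 2) 0 mod (4*L) = j" using assms(3,4) by (metis modj)
    moreover have "0 \<le> (j - 3*L - 3) div 2" "(j - 3*L - 3) div 2 < L" using od c1 False assms by presburger+
    ultimately show ?thesis by (intro exI[of _ "(j - 3*L - 3) div 2"] exI[of _ "0::nat"]) auto
    qed
  qed
qed

lemma sB: assumes "L = 4*K+2" "K \<ge> 0" "0 \<le> j" "j < 4*L"
  shows "\<exists>y e. (0 \<le> y \<and> y < L \<and> e < 4) \<and> Bv L y e mod (4*L) = j"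
proof -
  have "j mod 4 = 0 \<or> j mod 4 = 1 \<or> j mod 4 = 2 \<or> j mod 4 = 3" by presburger
  thus ?thesis
  proof (elim disjE)
    assume c: "j mod 4 = 0"
    have "Bv L (j div 4) 3 = j + (4*L)*(0)" using c assms by (simp add: Bv_def, presburger)
    hence "Bv L (j div 4) 3 mod (4*L) = j" using assms(3,4) by (metis modj)
    moreover have "0 \<le> j div 4" "j div 4 < L" using c assms by presburger+
    ultimately show ?thesis by (intro exI[of _ "j div 4"] exI[of _ "3::nat"]) auto
  next
    assume c: "j mod 4 = 3"
    have "Bv L ((j-3) div 4) 0 = j + (4*L)*(0)" using c assms by (simp add: Bv_def, presburger)
    hence "Bv L ((j-3) div 4) 0 mod (4*L) = j" using assms(3,4) by (metis modj)
    moreover have "0 \<le> (j-3) div 4" "(j-3) div 4 < L" using c assms by presburger+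
    ultimately show ?thesis by (intro exI[of _ "(j-3) div 4"] exI[of _ "0::nat"]) auto
  next
    assume c: "j mod 4 = 2" show ?thesis
    proof (cases "j \<ge> 3*L")
      case True
    have "Bv L ((j-3*L) div 4) 1 = j + (4*L)*(0)" using c True assms by (simp add: Bv_def, presburger)
    hence "Bv L ((j-3*L) div 4) 1 mod (4*L) = j" using assms(3,4) by (metis modj)
    moreover have "0 \<le> (j-3*L) div 4" "(j-3*L) div 4 < L" using c True assms by presburger+
    ultimately show ?thesis by (intro exI[of _ "(j-3*L) div 4"] exI[of _ "1::nat"]) auto
    next
      case False
    have "Bv L ((j+L) div 4) 1 = j + (4*L)*(1)" using c False assms by (simp add: Bv_def, presburger)
    hence "Bv L ((j+L) div 4) 1 mod (4*L) = j" using assms(3,4) by (metis modj)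
    moreover have "0 \<le> (j+L) div 4" "(j+L) div 4 < L" using c False assms by presburger+
    ultimately show ?thesis by (intro exI[of _ "(j+L) div 4"] exI[of _ "1::nat"]) auto
    qed
  next
    assume c: "j mod 4 = 1" show ?thesis
    proof (cases "j \<ge> L+3")
      case True
    have "Bv L ((j-L-3) div 4) 2 = j + (4*L)*(0)" using c True assms by (simp add: Bv_def, presburger)
    hence "Bv L ((j-L-3) div 4) 2 mod (4*L) = j" using assms(3,4) by (metis modj)
    moreover have "0 \<le> (j-L-3) div 4" "(j-L-3) div 4 < L" using c True assms by presburger+
    ultimately show ?thesis by (intro exI[of _ "(j-L-3) div 4"] exI[of _ "2::nat"]) auto
    next
      case False
    have "Bv L ((j+3*L-3) div 4) 2 = j + (4*L)*(1)" using c False assms by (simp add: Bv_def, presburger)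
    hence "Bv L ((j+3*L-3) div 4) 2 mod (4*L) = j" using assms(3,4) by (metis modj)
    moreover have "0 \<le> (j+3*L-3) div 4" "(j+3*L-3) div 4 < L" using c False assms by presburger+
    ultimately show ?thesis by (intro exI[of _ "(j+3*L-3) div 4"] exI[of _ "2::nat"]) auto
    qed
  qed
qed



definition good1 :: "int \<Rightarrow> (int \<Rightarrow> nat \<Rightarrow> bool) \<Rightarrow> (int \<Rightarrow> nat \<Rightarrow> int) \<Rightarrow> bool" where
  "good1 N P D \<longleftrightarrow> (\<exists>u v h. (u*v) mod N = 1 \<and>
     (\<forall>y e. P y e \<longrightarrow> D y e mod N = (u * h y e) mod N \<and> 0 < h y e \<and> h y e < N) \<and>
     (\<forall>j. 1 \<le> j \<and> j < N \<longrightarrow> (\<exists>y e. P y e \<and> h y e mod N = j)))"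

definition good0 :: "int \<Rightarrow> (int \<Rightarrow> nat \<Rightarrow> bool) \<Rightarrow> (int \<Rightarrow> nat \<Rightarrow> int) \<Rightarrow> bool" where
  "good0 N P D \<longleftrightarrow> (\<exists>u v h. (u*v) mod N = 1 \<and>
     (\<forall>y e. P y e \<longrightarrow> D y e mod N = (u * h y e) mod N) \<and>
     (\<forall>j. 0 \<le> j \<and> j < N \<longrightarrow> (\<exists>y e. P y e \<and> h y e mod N = j)))"

lemma negrep: "(D::int) mod N = (u*h) mod N \<Longrightarrow> (-D) mod N = ((-u)*h) mod N"
  by (metis mod_minus_eq mult_minus_left)

lemma good1_neg: "good1 N P D \<Longrightarrow> good1 N P (\<lambda>y e. - D y e)"
  unfolding good1_def
proof (elim exE conjE)
  fix u v h assume a: "(u*v) mod N = 1"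
    "\<forall>y e. P y e \<longrightarrow> D y e mod N = (u * h y e) mod N \<and> 0 < h y e \<and> h y e < N"
    "\<forall>j. 1 \<le> j \<and> j < N \<longrightarrow> (\<exists>y e. P y e \<and> h y e mod N = j)"
  show "\<exists>u v h. (u*v) mod N = 1 \<and>
     (\<forall>y e. P y e \<longrightarrow> (- D y e) mod N = (u * h y e) mod N \<and> 0 < h y e \<and> h y e < N) \<and>
     (\<forall>j. 1 \<le> j \<and> j < N \<longrightarrow> (\<exists>y e. P y e \<and> h y e mod N = j))"
  proof (rule exI[of _ "-u"], rule exI[of _ "-v"], rule exI[of _ h], intro conjI allI impI)
    show "((-u)*(-v)) mod N = 1" using a(1) by simp
  next
    fix y e assume p: "P y e"
    show "(- D y e) mod N = ((-u) * h y e) mod N" by (rule negrep) (use a(2) p in blast)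
    show "0 < h y e" "h y e < N" using a(2) p by blast+
  next
    fix j :: int assume "1 \<le> j \<and> j < N"
    thus "\<exists>y e. P y e \<and> h y e mod N = j" using a(3) by blast
  qed
qed

lemma good0_neg: "good0 N P D \<Longrightarrow> good0 N P (\<lambda>y e. - D y e)"
  unfolding good0_def
proof (elim exE conjE)
  fix u v h assume a: "(u*v) mod N = 1"
    "\<forall>y e. P y e \<longrightarrow> D y e mod N = (u * h y e) mod N"
    "\<forall>j. 0 \<le> j \<and> j < N \<longrightarrow> (\<exists>y e. P y e \<and> h y e mod N = j)"
  show "\<exists>u v h. (u*v) mod N = 1 \<and>
     (\<forall>y e. P y e \<longrightarrow> (- D y e) mod N = (u * h y e) mod N) \<and>
     (\<forall>j. 0 \<le> j \<and> j < N \<longrightarrow> (\<exists>y e. P y e \<and> h y e mod N = j))"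
  proof (rule exI[of _ "-u"], rule exI[of _ "-v"], rule exI[of _ h], intro conjI allI impI)
    show "((-u)*(-v)) mod N = 1" using a(1) by simp
  next
    fix y e assume p: "P y e"
    show "(- D y e) mod N = ((-u) * h y e) mod N" by (rule negrep) (use a(2) p in blast)
  next
    fix j :: int assume "0 \<le> j \<and> j < N"
    thus "\<exists>y e. P y e \<and> h y e mod N = j" using a(3) by blast
  qed
qed

lemma good1_cong: "good1 N P D \<Longrightarrow> (\<And>y e. D' y e = D y e) \<Longrightarrow> good1 N P D'"
proof -
  assume "good1 N P D" "\<And>y e. D' y e = D y e"
  then have "D' = D" by auto
  thus ?thesis using \<open>good1 N P D\<close> by simp
qed

lemma good0_cong: "good0 N P D \<Longrightarrow> (\<And>y e. D' y e = D y e) \<Longrightarrow> good0 N P D'"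
proof -
  assume "good0 N P D" "\<And>y e. D' y e = D y e"
  then have "D' = D" by auto
  thus ?thesis using \<open>good0 N P D\<close> by simp
qed

lemma multmod: "((u::int) * ((v*g) mod N)) mod N = (((u*v) mod N) * g) mod N"
  by (metis mod_mult_left_eq mod_mult_right_eq mult.assoc)

lemma good1_surj: assumes "good1 N P D" "1 \<le> g" "g < N"
  shows "\<exists>y e. P y e \<and> D y e mod N = g"
proof -
  obtain u v h where a: "(u*v) mod N = 1"
    "\<forall>y e. P y e \<longrightarrow> D y e mod N = (u * h y e) mod N \<and> 0 < h y e \<and> h y e < N"
    "\<forall>j. 1 \<le> j \<and> j < N \<longrightarrow> (\<exists>y e. P y e \<and> h y e mod N = j)"
    using assms(1) unfolding good1_def by blast
  have Np: "N > 0" using assms by simp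
  have nz: "(v*g) mod N \<noteq> 0"
  proof
    assume "(v*g) mod N = 0"
    hence "(u * ((v*g) mod N)) mod N = 0" by simp
    hence "g mod N = 0" unfolding multmod a(1) by simp
    thus False using assms by simp
  qed
  have "0 \<le> (v*g) mod N" "(v*g) mod N < N" using Np by auto
  hence "1 \<le> (v*g) mod N" "(v*g) mod N < N" using nz by linarith+
  then obtain y e where ye: "P y e" "h y e mod N = (v*g) mod N" using a(3) by blast
  have "D y e mod N = (u * h y e) mod N" using a(2) ye by blast
  also have "\<dots> = (u * (h y e mod N)) mod N" by (simp add: mod_mult_right_eq)
  also have "\<dots> = g mod N" unfolding ye(2) multmod a(1) by simp
  also have "\<dots> = g" using assms by simp
  finally show ?thesis using ye by blast
qed

lemma good0_surj: assumes "good0 N P D" "0 \<le> g" "g < N"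
  shows "\<exists>y e. P y e \<and> D y e mod N = g"
proof -
  obtain u v h where a: "(u*v) mod N = 1"
    "\<forall>y e. P y e \<longrightarrow> D y e mod N = (u * h y e) mod N"
    "\<forall>j. 0 \<le> j \<and> j < N \<longrightarrow> (\<exists>y e. P y e \<and> h y e mod N = j)"
    using assms(1) unfolding good0_def by blast
  have Np: "N > 0" using assms by simp
  have "0 \<le> (v*g) mod N" "(v*g) mod N < N" using Np by auto
  then obtain y e where ye: "P y e" "h y e mod N = (v*g) mod N" using a(3) by blast
  have "D y e mod N = (u * h y e) mod N" using a(2) ye by blast
  also have "\<dots> = (u * (h y e mod N)) mod N" by (simp add: mod_mult_right_eq)
  also have "\<dots> = g mod N" unfolding ye(2) multmod a(1) by simp
  also have "\<dots> = g" using assms by simp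
  finally show ?thesis using ye by blast
qed

lemma good1_nz: assumes "good1 N P D" "P y e" shows "D y e mod N \<noteq> 0"
proof
  assume z: "D y e mod N = 0"
  obtain u v h where a: "(u*v) mod N = 1"
    "\<forall>y e. P y e \<longrightarrow> D y e mod N = (u * h y e) mod N \<and> 0 < h y e \<and> h y e < N"
    using assms(1) unfolding good1_def by blast
  have b: "(u * h y e) mod N = 0" "0 < h y e" "h y e < N" using a(2) assms(2) z by auto
  have "(v * ((u * h y e) mod N)) mod N = 0" using b by simp
  hence "(((v*u) mod N) * h y e) mod N = 0" using multmod[of v u "h y e" N] by simp
  hence "h y e mod N = 0" using a(1) by (simp add: mult.commute)
  thus False using b by simp
qed



lemma prime3: "prime (3::int)" by simp

lemma inv3: fixes L K :: int assumes "L = 4*K+2" "K \<ge> 0" "L mod 3 \<noteq> 0"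
  shows "\<exists>w. (3*w) mod (4*L) = 1"
proof -
  have "\<not> 3 dvd 4*L" using assms(3) by presburger
  hence "coprime 3 (4*L)" using prime3 prime_imp_coprime_int by blast
  then obtain x where "[3*x = 1] (mod (4*L))" using cong_solve_coprime_int by blast
  hence "(3*x) mod (4*L) = 1 mod (4*L)" by (simp add: cong_def)
  moreover have "1 mod (4*L) = 1" using assms by simp
  ultimately show ?thesis by auto
qed

lemma sqinv: fixes w N u q :: int assumes "(3*w) mod N = (1::int)" "u*u = 9 + N*q"
  shows "(u * (u*w*w)) mod N = 1"
proof -
  have "u * (u*w*w) = (u*u)*(w*w)" by (simp add: ac_simps)
  also have "\<dots> = (9 + N*q)*(w*w)" using assms(2) by simp
  also have "\<dots> = (3*w)*(3*w) + N*(q*w*w)" by (simp add: algebra_simps)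
  finally have "u * (u*w*w) = (3*w)*(3*w) + N*(q*w*w)" .
  hence "(u * (u*w*w)) mod N = ((3*w)*(3*w)) mod N" by simp
  also have "\<dots> = (((3*w) mod N)*((3*w) mod N)) mod N" by (simp add: mod_mult_eq)
  also have "\<dots> = 1 mod N" using assms(1) by simp
  also have "\<dots> = 1" using assms(1) by (metis mod_mod_trivial)
  finally show ?thesis .
qed


abbreviation PP :: "int \<Rightarrow> int \<Rightarrow> nat \<Rightarrow> bool" where
  "PP L y e \<equiv> 0 \<le> y \<and> y < L \<and> e < 4"

context
  fixes L K w :: int
  assumes LK: "L = 4*K+2" and K0: "K \<ge> 0" and w: "(3*w) mod (4*L) = 1"
begin

lemma G10: "good1 (4*L) (PP L) (\<lambda>y e. Bv L y e - Av L y e)"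
  unfolding good1_def
proof (rule exI[of _ 3], rule exI[of _ w], rule exI[of _ "h1 L"], intro conjI allI impI)
  show "(3*w) mod (4*L) = 1" by (rule w)
next
  fix y e assume p: "PP L y e"
  show "(Bv L y e - Av L y e) mod (4*L) = (3 * h1 L y e) mod (4*L)" using c10[OF LK] p by blast
  show "0 < h1 L y e" "h1 L y e < 4*L" using p LK K0 by (auto simp: h1_def)
next
  fix j :: int assume "1 \<le> j \<and> j < 4*L"
  thus "\<exists>y e. PP L y e \<and> h1 L y e mod (4*L) = j" using s1[OF LK K0] by blast
qed

lemma G20: "good1 (4*L) (PP L) (\<lambda>y e. Cv L y e - Av L y e)"
  unfolding good1_def
proof (rule exI[of _ "2*L-3"], rule exI[of _ "(2*L-3)*w*w"], rule exI[of _ "h2 L"], intro conjI allI impI)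
  show "((2*L-3)*((2*L-3)*w*w)) mod (4*L) = 1"
    by (rule sqinv[OF w, of _ "L-3"]) (simp add: algebra_simps)
next
  fix y e assume p: "PP L y e"
  show "(Cv L y e - Av L y e) mod (4*L) = ((2*L-3) * h2 L y e) mod (4*L)" using c20[OF LK] p by blast
  show "0 < h2 L y e" "h2 L y e < 4*L" using p LK K0 by (auto simp: h2_def)
next
  fix j :: int assume "1 \<le> j \<and> j < 4*L"
  thus "\<exists>y e. PP L y e \<and> h2 L y e mod (4*L) = j" using s2[OF LK K0] by blast
qed

lemma G21: "good1 (4*L) (PP L) (\<lambda>y e. Cv L y e - Bv L y e)"
  unfolding good1_def
proof (rule exI[of _ "L-3"], rule exI[of _ "(L-3)*w*w"], rule exI[of _ "h3 L"], intro conjI allI impI)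
  show "((L-3)*((L-3)*w*w)) mod (4*L) = 1"
    by (rule sqinv[OF w, of _ "K-1"]) (simp add: LK algebra_simps)
next
  fix y e assume p: "PP L y e"
  show "(Cv L y e - Bv L y e) mod (4*L) = ((L-3) * h3 L y e) mod (4*L)" using c21[OF LK] p by blast
  show "0 < h3 L y e" "h3 L y e < 4*L" using p LK K0 by (auto simp: h3_def)
next
  fix j :: int assume "1 \<le> j \<and> j < 4*L"
  thus "\<exists>y e. PP L y e \<and> h3 L y e mod (4*L) = j" using s3[OF LK K0] by blast
qed

lemma GA: "good0 (4*L) (PP L) (Av L)"
  unfolding good0_def
proof (rule exI[of _ 1], rule exI[of _ 1], rule exI[of _ "Av L"], intro conjI allI impI)
  show "(1*1) mod (4*L) = (1::int)" using LK K0 by simp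
next
  fix y e assume p: "PP L y e"
  show "Av L y e mod (4*L) = (1 * Av L y e) mod (4*L)" by simp
next
  fix j :: int assume j: "0 \<le> j \<and> j < 4*L"
  have Lp: "L > 0" using LK K0 by simp
  have d4: "j div L < 4"
  proof (rule ccontr)
    assume a: "\<not> j div L < 4"
    hence "4 * L \<le> (j div L) * L" using Lp by (simp add: mult_right_mono)
    also have "\<dots> \<le> j" using Lp by (metis div_mult_mod_eq le_add_same_cancel1 pos_mod_sign)
    finally show False using j by simp
  qed
  have d0: "0 \<le> j div L" using j Lp pos_imp_zdiv_nonneg_iff by auto
  have e1: "Av L (j mod L) (nat (j div L)) = j" using d0 by (simp add: Av_def)
  have e2: "0 \<le> j mod L" "j mod L < L" using Lp by simp_all
  have e3: "nat (j div L) < 4" using d4 by simp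
  have e4: "j mod (4*L) = j" using j by simp
  show "\<exists>y e. PP L y e \<and> Av L y e mod (4*L) = j"
    apply (rule exI[of _ "j mod L"], rule exI[of _ "nat (j div L)"])
    unfolding e1 e4 using e2 e3 by blast
qed

lemma GB: "good0 (4*L) (PP L) (Bv L)"
  unfolding good0_def
proof (rule exI[of _ 1], rule exI[of _ 1], rule exI[of _ "Bv L"], intro conjI allI impI)
  show "(1*1) mod (4*L) = (1::int)" using LK K0 by simp
next
  fix y e assume p: "PP L y e"
  show "Bv L y e mod (4*L) = (1 * Bv L y e) mod (4*L)" by simp
next
  fix j :: int assume "0 \<le> j \<and> j < 4*L"
  thus "\<exists>y e. PP L y e \<and> Bv L y e mod (4*L) = j" using sB[OF LK K0] by blast
qed

lemma GC: "good0 (4*L) (PP L) (Cv L)"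
  unfolding good0_def
proof (rule exI[of _ "L-1"], rule exI[of _ "L-1"], rule exI[of _ "h4 L"], intro conjI allI impI)
  have "(L-1)*(L-1) = 1 + (4*L)*K" using LK by (simp add: algebra_simps)
  hence "((L-1)*(L-1)) mod (4*L) = (1 + (4*L)*K) mod (4*L)" by simp
  also have "\<dots> = 1 mod (4*L)" by simp
  also have "\<dots> = 1" using LK K0 by simp
  finally show "((L-1)*(L-1)) mod (4*L) = 1" .
next
  fix y e assume p: "PP L y e"
  show "Cv L y e mod (4*L) = ((L-1) * h4 L y e) mod (4*L)" using cC[OF LK] p by blast
next
  fix j :: int assume "0 \<le> j \<and> j < 4*L"
  thus "\<exists>y e. PP L y e \<and> h4 L y e mod (4*L) = j" using s4[OF LK K0] by blast
qed

end



definition Vc :: "nat \<Rightarrow> int \<Rightarrow> int \<Rightarrow> nat \<Rightarrow> int" where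
  "Vc j L y e = (if j = 0 then Av L y e else if j = 1 then Bv L y e else if j = 2 then Cv L y e else 0)"

definition QQ :: "nat \<Rightarrow> nat \<Rightarrow> nat \<Rightarrow> int" where
  "QQ m i j = (if i < 4*m then Vc j (int m) (int (i mod m)) (i div m) mod (4 * int m) else 0)"

lemma rowP: assumes "i < 4*m" shows "PP (int m) (int (i mod m)) (i div m)"
proof -
  have m0: "m > 0" using assms by simp
  have "i div m < 4" using assms by (simp add: div_less_iff_less_mult mult.commute)
  thus ?thesis using m0 by simp
qed

lemma rowex: assumes "PP (int m) y e" shows "\<exists>i<4*m. int (i mod m) = y \<and> i div m = e"
proof -
  have m0: "m > 0" using assms by simp
  have y: "nat y < m" using assms by (auto simp: nat_less_iff)
  define i where "i = nat y + m*e"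
  have "i mod m = nat y" unfolding i_def using y by simp
  moreover have "i div m = e" unfolding i_def using y by simp
  moreover have "i < 4*m"
  proof -
    have "e \<le> 3" using assms by simp
    hence "m*e \<le> m*3" by simp
    thus ?thesis unfolding i_def using y by linarith
  qed
  ultimately show ?thesis using assms by (intro exI[of _ i]) auto
qed

lemma diffrow: "i < 4*m \<Longrightarrow> (QQ m i j - QQ m i j') mod (4*int m) =
   (Vc j (int m) (int (i mod m)) (i div m) - Vc j' (int m) (int (i mod m)) (i div m)) mod (4*int m)"
  by (simp add: QQ_def mod_diff_eq)

context
  fixes L K w :: int
  assumes LK: "L = 4*K+2" and K0: "K \<ge> 0" and w: "(3*w) mod (4*L) = 1"
begin

lemma pair1: assumes "j < 4" "j' < 4" "j \<noteq> j'" "j \<noteq> 3" "j' \<noteq> 3"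
  shows "good1 (4*L) (PP L) (\<lambda>y e. Vc j L y e - Vc j' L y e)"
proof -
  have "(j = 1 \<and> j' = 0) \<or> (j = 0 \<and> j' = 1) \<or> (j = 2 \<and> j' = 0) \<or> (j = 0 \<and> j' = 2)
     \<or> (j = 2 \<and> j' = 1) \<or> (j = 1 \<and> j' = 2)" using assms by auto
  thus ?thesis
  proof (elim disjE conjE)
    assume "j = 1" "j' = 0" thus ?thesis using G10[OF LK K0 w] by (simp add: Vc_def)
  next
    assume "j = 0" "j' = 1" thus ?thesis using good1_neg[OF G10[OF LK K0 w]]
      by (elim good1_cong) (simp add: Vc_def)
  next
    assume "j = 2" "j' = 0" thus ?thesis using G20[OF LK K0 w] by (simp add: Vc_def)
  next
    assume "j = 0" "j' = 2" thus ?thesis using good1_neg[OF G20[OF LK K0 w]]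
      by (elim good1_cong) (simp add: Vc_def)
  next
    assume "j = 2" "j' = 1" thus ?thesis using G21[OF LK K0 w] by (simp add: Vc_def)
  next
    assume "j = 1" "j' = 2" thus ?thesis using good1_neg[OF G21[OF LK K0 w]]
      by (elim good1_cong) (simp add: Vc_def)
  qed
qed

lemma pair0: assumes "j < 4" "j' < 4" "j \<noteq> j'" "j = 3 \<or> j' = 3"
  shows "good0 (4*L) (PP L) (\<lambda>y e. Vc j L y e - Vc j' L y e)"
proof -
  have "(j = 0 \<and> j' = 3) \<or> (j = 3 \<and> j' = 0) \<or> (j = 1 \<and> j' = 3) \<or> (j = 3 \<and> j' = 1)
     \<or> (j = 2 \<and> j' = 3) \<or> (j = 3 \<and> j' = 2)" using assms by auto
  thus ?thesis
  proof (elim disjE conjE)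
    assume "j = 0" "j' = 3" thus ?thesis using GA[OF LK K0 w]
      by (elim good0_cong) (simp add: Vc_def)
  next
    assume "j = 3" "j' = 0" thus ?thesis using good0_neg[OF GA[OF LK K0 w]]
      by (elim good0_cong) (simp add: Vc_def)
  next
    assume "j = 1" "j' = 3" thus ?thesis using GB[OF LK K0 w]
      by (elim good0_cong) (simp add: Vc_def)
  next
    assume "j = 3" "j' = 1" thus ?thesis using good0_neg[OF GB[OF LK K0 w]]
      by (elim good0_cong) (simp add: Vc_def)
  next
    assume "j = 2" "j' = 3" thus ?thesis using GC[OF LK K0 w]
      by (elim good0_cong) (simp add: Vc_def)
  next
    assume "j = 3" "j' = 2" thus ?thesis using good0_neg[OF GC[OF LK K0 w]]
      by (elim good0_cong) (simp add: Vc_def)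
  qed
qed

end

lemma construction:
  fixes k m :: nat
  assumes mk: "m = 4 * k + 2" and m3: "int m mod 3 \<noteq> 0"
  shows "cyclic_DCA 4 (4 * m + 1) (4 * m) (QQ m) \<and> DCA_normalized 4 (4 * m) (QQ m)
             \<and> DCA_P1 4 (4 * m) (QQ m) \<and> DCA_P2 4 (4 * m) (QQ m)"
proof -
  define L where "L = int m"
  define K where "K = int k"
  have LK: "L = 4*K+2" and K0: "K \<ge> 0" using mk unfolding L_def K_def by auto
  obtain w where w: "(3*w) mod (4*L) = 1" using inv3[OF LK K0] m3 L_def by auto
  have Np: "4*L > 0" using LK K0 by simp
  have N: "int (4*m) = 4*L" unfolding L_def by simp
  have m0: "m > 0" using mk by simp
  have surj1: "\<exists>i<4*m. (QQ m i j - QQ m i j') mod (4*L) = g"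
    if H: "good1 (4*L) (PP L) (\<lambda>y e. Vc j L y e - Vc j' L y e)" "1 \<le> g" "g < 4*L" for j j' g
  proof -
    obtain y e where ye: "PP L y e" "(Vc j L y e - Vc j' L y e) mod (4*L) = g"
      using good1_surj[OF H] by blast
    obtain i where i: "i < 4*m" "int (i mod m) = y" "i div m = e" using rowex[OF ye(1)[unfolded L_def]] by auto
    show ?thesis using diffrow[OF i(1), of j j'] i ye(2) L_def by (intro exI[of _ i]) auto
  qed
  have surj0: "\<exists>i<4*m. (QQ m i j - QQ m i j') mod (4*L) = g"
    if H: "good0 (4*L) (PP L) (\<lambda>y e. Vc j L y e - Vc j' L y e)" "0 \<le> g" "g < 4*L" for j j' g
  proof -
    obtain y e where ye: "PP L y e" "(Vc j L y e - Vc j' L y e) mod (4*L) = g"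
      using good0_surj[OF H] by blast
    obtain i where i: "i < 4*m" "int (i mod m) = y" "i div m = e" using rowex[OF ye(1)[unfolded L_def]] by auto
    show ?thesis using diffrow[OF i(1), of j j'] i ye(2) L_def by (intro exI[of _ i]) auto
  qed
  have nz: "(QQ m i j - QQ m i j') mod (4*L) \<noteq> 0"
    if "good1 (4*L) (PP L) (\<lambda>y e. Vc j L y e - Vc j' L y e)" "i < 4*m" for i j j'
  proof -
    have "PP L (int (i mod m)) (i div m)" using rowP[OF that(2)] L_def by simp
    from good1_nz[OF that(1) this] show ?thesis using diffrow[OF that(2), of j j'] L_def by simp
  qed
  have QN: "QQ m (4*m) j = 0" for j by (simp add: QQ_def)
  have A: "cyclic_DCA 4 (4 * m + 1) (4 * m) (QQ m)"
    unfolding cyclic_DCA_def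
  proof (intro conjI allI impI ballI)
    fix i j assume "i < 4*m+1" "j < (4::nat)"
    show "0 \<le> QQ m i j" using Np L_def by (simp add: QQ_def)
    show "QQ m i j < int (4*m)" using Np L_def by (simp add: QQ_def)
  next
    fix j j' :: nat and g :: int assume jj: "j < 4" "j' < 4" "j \<noteq> j'" and g: "g \<in> {0..<int (4*m)}"
    have g': "0 \<le> g" "g < 4*L" using g N by auto
    show "\<exists>i<4*m+1. (QQ m i j - QQ m i j') mod int (4*m) = g"
    proof (cases "j = 3 \<or> j' = 3")
      case True
      from surj0[OF pair0[OF LK K0 w jj True] g'] obtain i where "i<4*m" "(QQ m i j - QQ m i j') mod (4*L) = g" by blast
      thus ?thesis using N by (intro exI[of _ i]) auto
    next
      case False
      show ?thesis
      proof (cases "g = 0")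
        case True thus ?thesis using QN by (intro exI[of _ "4*m"]) auto
      next
        case gn: False
        hence "1 \<le> g" using g' by simp
        from surj1[OF pair1[OF LK K0 w jj] this g'(2)] False obtain i
          where "i<4*m" "(QQ m i j - QQ m i j') mod (4*L) = g" by blast
        thus ?thesis using N by (intro exI[of _ i]) auto
      qed
    qed
  qed
  have B: "DCA_normalized 4 (4 * m) (QQ m)"
    unfolding DCA_normalized_def by (simp add: QQ_def Vc_def)
  have C: "DCA_P1 4 (4 * m) (QQ m)"
    unfolding DCA_P1_def
  proof (intro allI impI)
    fix j :: nat assume j: "j < 4"
    define z where "z = (if j = 1 then 3*m else if j = 2 then 2*m else 0)"
    have zl: "z < 4*m" using m0 by (simp add: z_def)
    have zQ: "QQ m z j = 0"
    proof -
      have "j = 0 \<or> j = 1 \<or> j = 2 \<or> j = 3" using j by auto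
      thus ?thesis
      proof (elim disjE)
        assume "j = 0" thus ?thesis using m0 by (simp add: z_def QQ_def Vc_def Av_def)
      next
        assume "j = 1" thus ?thesis using m0 by (simp add: z_def QQ_def Vc_def Bv_def)
      next
        assume "j = 2" thus ?thesis using m0 by (simp add: z_def QQ_def Vc_def Cv_def)
      next
        assume "j = 3" thus ?thesis using m0 by (simp add: z_def QQ_def Vc_def)
      qed
    qed
    have sub: "{z, 4*m} \<subseteq> {i. i < 4*m+1 \<and> QQ m i j = 0}" using zl zQ QN by auto
    have fin: "finite {i. i < 4*m+1 \<and> QQ m i j = 0}" by simp
    have "card {z, 4*m} = 2" using zl by simp
    thus "2 \<le> card {i. i < 4*m+1 \<and> QQ m i j = 0}" using card_mono[OF fin sub] by simp
  qed
  have D: "DCA_P2 4 (4 * m) (QQ m)"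
    unfolding DCA_P2_def
  proof (intro allI impI)
    fix j j' :: nat assume jj: "j < 4" "j' < 4" "j \<noteq> j'" "j \<noteq> 4-1" "j' \<noteq> 4-1"
    have jj': "j \<noteq> 3" "j' \<noteq> 3" using jj by auto
    note G = pair1[OF LK K0 w jj(1-3) jj']
    show "(\<lambda>i. (QQ m i j - QQ m i j') mod int (4*m)) ` {0..<4*m} = {1..<int (4*m)}"
    proof
      show "(\<lambda>i. (QQ m i j - QQ m i j') mod int (4*m)) ` {0..<4*m} \<subseteq> {1..<int (4*m)}"
      proof
        fix x assume "x \<in> (\<lambda>i. (QQ m i j - QQ m i j') mod int (4*m)) ` {0..<4*m}"
        then obtain i where i: "i < 4*m" "x = (QQ m i j - QQ m i j') mod (4*L)" using N by auto
        have "x \<noteq> 0" using nz[OF G i(1)] i(2) by simp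
        moreover have "0 \<le> x" "x < 4*L" using i(2) Np by auto
        ultimately show "x \<in> {1..<int (4*m)}" using N by auto
      qed
    next
      show "{1..<int (4*m)} \<subseteq> (\<lambda>i. (QQ m i j - QQ m i j') mod int (4*m)) ` {0..<4*m}"
      proof
        fix g assume "g \<in> {1..<int (4*m)}"
        hence g: "1 \<le> g" "g < 4*L" using N by auto
        from surj1[OF G g] obtain i where "i<4*m" "(QQ m i j - QQ m i j') mod (4*L) = g" by blast
        thus "g \<in> (\<lambda>i. (QQ m i j - QQ m i j') mod int (4*m)) ` {0..<4*m}" using N
          by (intro image_eqI[of _ _ i]) auto
      qed
    qed
  qed
  show ?thesis using A B C D by blast
qed


lemma mod3_sq: fixes F :: int shows "(F^2 + F - 2) mod 3 = 0 \<Longrightarrow> F mod 3 = 1"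
proof -
  assume h: "(F^2 + F - 2) mod 3 = 0"
  define q where "q = F div 3"
  define r where "r = F mod 3"
  have F: "F = 3*q + r" unfolding q_def r_def by simp
  have "(F^2 + F - 2) mod 3 = (r*r + r - 2) mod 3"
    by (rule modeq[where q="3*q*q + 2*q*r + q"]) (simp add: F power2_eq_square algebra_simps)
  hence "(r*r + r - 2) mod 3 = 0" using h by simp
  moreover have "r = 0 \<or> r = 1 \<or> r = 2" unfolding r_def by presburger
  ultimately show "F mod 3 = 1" unfolding r_def[symmetric] by auto
qed

theorem mainTheorem3:
  fixes k f m :: nat
  assumes "m = 4 * k + 2"
    and "gcd (int f) (4 * int m) = 2"
    and "gcd (int f - 1) (4 * int m) = 1"
    and "[int f ^ 2 + int f - 2 = 2 * int m] (mod (4 * int m))"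
  shows "\<exists>Q. cyclic_DCA 4 (4 * m + 1) (4 * m) Q \<and> DCA_normalized 4 (4 * m) Q
             \<and> DCA_P1 4 (4 * m) Q \<and> DCA_P2 4 (4 * m) Q"
proof -
  have m3: "int m mod 3 \<noteq> 0"
  proof
    assume m3: "int m mod 3 = 0"
    hence d: "3 dvd 4 * int m" by presburger
    have "[int f ^ 2 + int f - 2 = 2 * int m] (mod 3)" by (rule cong_dvd_modulus[OF assms(4) d])
    hence "(int f ^ 2 + int f - 2) mod 3 = (2 * int m) mod 3" by (simp add: cong_def)
    also have "\<dots> = 0" using m3 by presburger
    finally have "int f mod 3 = 1" by (rule mod3_sq)
    hence "3 dvd int f - 1" by presburger
    hence "3 dvd gcd (int f - 1) (4 * int m)" using d by simp
    thus False using assms(3) by simp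
  qed
  show ?thesis using construction[OF assms(1) m3] by blast
qed

end
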